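(* Let $\gamma>1$ and $0<\alpha<\frac12$, and let $\bar\rho\ge0$. Let $(\rho,u)$ be a smooth solution of $\rho_t+(\rho u)_x=0$, $(\rho u)_t+(\rho u^2+\rho^\gamma)_x=(\rho^\alpha u_x)_x$ on $\mathbb R\times[0,T]$ with $\rho>0$, and with $\rho-\bar\rho$, $u$ and their derivatives decaying at $|x|\to\infty$ fast enough that all spatial boundary terms vanish. Then $$\sup_{t\in[0,T]}\int_{\mathbb R}\Big\{\rho|u|^2+\Big[\Big(\tfrac{\rho^{\alpha-1/2}}{\alpha-1/2}\Big)_x\Big]^2+\rho\Psi(\rho,\bar\rho)\Big\}(x,t)dx+\int_0^T\!\!\int_{\mathbb R}\Big\{\rho^\alpha u_x^2+\big[(\rho^{\frac{\alpha+\gamma-1}{2}}-\bar\rho^{\frac{\alpha+\gamma-1}{2}})_x\big]^2\Big\}dxdt\le C,$$ where $C$ depends only on $\alpha,\gamma$ and on $\int_{\mathbb R}\{\rho|u|^2+[(\rho^{\alpha-1/2})_x]^2+\rho\Psi(\rho,\bar\rho)\}(x,0)dx$, and is independent of $T$.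
   Context: $\Psi(\rho,\bar\rho)=\int_{\bar\rho}^{\rho}\frac{s^\gamma-\bar\rho^\gamma}{s^2}ds$, so that $\rho\Psi(\rho,\bar\rho)=\frac{1}{\gamma-1}[\rho^\gamma-\bar\rho^\gamma-\gamma\bar\rho^{\gamma-1}(\rho-\bar\rho)]\ge0$. *)

theory Defs
  imports "HOL-Analysis.Analysis"
begin

definition px :: "(real \<Rightarrow> real \<Rightarrow> real) \<Rightarrow> real \<Rightarrow> real \<Rightarrow> real" where
  "px f x t = deriv (\<lambda>y. f y t) x"

definition pt :: "(real \<Rightarrow> real \<Rightarrow> real) \<Rightarrow> real \<Rightarrow> real \<Rightarrow> real" where
  "pt f x t = deriv (\<lambda>s. f x s) t"

fun dop :: "bool list \<Rightarrow> (real \<Rightarrow> real \<Rightarrow> real) \<Rightarrow> real \<Rightarrow> real \<Rightarrow> real" where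
  "dop [] f = f"
| "dop (b # w) f = (if b then px else pt) (dop w f)"

definition smooth2 :: "(real \<Rightarrow> real \<Rightarrow> real) \<Rightarrow> bool" where
  "smooth2 f \<longleftrightarrow> (\<forall>w. continuous_on UNIV (\<lambda>z::real\<times>real. dop w f (fst z) (snd z))
      \<and> (\<forall>x t. (\<lambda>y. dop w f y t) differentiable (at x)
             \<and> (\<lambda>s. dop w f x s) differentiable (at t)))"

text \<open>Psi(rho, rhobar) = int_{rhobar}^{rho} (s^gamma - rhobar^gamma)/s^2 ds (oriented integral).\<close>
definition Psi :: "real \<Rightarrow> real \<Rightarrow> real \<Rightarrow> real" where
  "Psi \<gamma> r rb = (LBINT s=ereal rb..ereal r. (s powr \<gamma> - rb powr \<gamma>) / s\<^sup>2)"

definition NS_solution :: "real \<Rightarrow> real \<Rightarrow> real \<Rightarrow> (real \<Rightarrow> real \<Rightarrow> real) \<Rightarrow> (real \<Rightarrow> real \<Rightarrow> real) \<Rightarrow> bool" where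
  "NS_solution \<alpha> \<gamma> T \<rho> u \<longleftrightarrow>
     (\<forall>x t. t \<in> {0..T} \<longrightarrow>
        pt \<rho> x t + px (\<lambda>x t. \<rho> x t * u x t) x t = 0
      \<and> pt (\<lambda>x t. \<rho> x t * u x t) x t
          + px (\<lambda>x t. \<rho> x t * (u x t)\<^sup>2 + \<rho> x t powr \<gamma>) x t
        = px (\<lambda>x t. \<rho> x t powr \<alpha> * px u x t) x t)"

text \<open>Spatial boundary terms: the fluxes of the energy identity and of the BD-entropy
  identity (with v = u + rho^(alpha-2) rho_x).  "Decay fast enough that all spatial boundary
  terms vanish" is made precise as: these fluxes tend to 0 as x \<rightarrow> \<plusminus>\<infinity> for every
  t in [0,T], and the time derivatives of the densities and the x-derivatives of the fluxes
  are Lebesgue integrable on R x [0,T] (so the formal integrations by parts are legitimate).\<close>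
definition Gd :: "real \<Rightarrow> real \<Rightarrow> (real \<Rightarrow> real \<Rightarrow> real) \<Rightarrow> real \<Rightarrow> real \<Rightarrow> real" where
  "Gd \<gamma> rb \<rho> x t = \<rho> x t * Psi \<gamma> (\<rho> x t) rb"

definition BDv :: "real \<Rightarrow> (real \<Rightarrow> real \<Rightarrow> real) \<Rightarrow> (real \<Rightarrow> real \<Rightarrow> real) \<Rightarrow> real \<Rightarrow> real \<Rightarrow> real" where
  "BDv \<alpha> \<rho> u x t = u x t + \<rho> x t powr (\<alpha> - 2) * px \<rho> x t"

definition boundary_terms_vanish ::
  "real \<Rightarrow> real \<Rightarrow> real \<Rightarrow> real \<Rightarrow> (real \<Rightarrow> real \<Rightarrow> real) \<Rightarrow> (real \<Rightarrow> real \<Rightarrow> real) \<Rightarrow> bool" where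
  "boundary_terms_vanish \<alpha> \<gamma> rb T \<rho> u \<longleftrightarrow>
    (let e1 = (\<lambda>x t. \<rho> x t * (u x t)\<^sup>2 / 2 + Gd \<gamma> rb \<rho> x t);
         e2 = (\<lambda>x t. \<rho> x t * (BDv \<alpha> \<rho> u x t)\<^sup>2 / 2 + Gd \<gamma> rb \<rho> x t);
         F1 = (\<lambda>x t. \<rho> x t * (u x t)^3 / 2
                    + u x t * (Gd \<gamma> rb \<rho> x t + \<rho> x t powr \<gamma> - rb powr \<gamma>)
                    - \<rho> x t powr \<alpha> * u x t * px u x t);
         F2 = (\<lambda>x t. \<rho> x t * u x t * (BDv \<alpha> \<rho> u x t)\<^sup>2 / 2
                    + u x t * (Gd \<gamma> rb \<rho> x t + \<rho> x t powr \<gamma> - rb powr \<gamma>))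
     in (\<forall>t\<in>{0..T}. ((\<lambda>x. F1 x t) \<longlongrightarrow> 0) at_top \<and> ((\<lambda>x. F1 x t) \<longlongrightarrow> 0) at_bot
                   \<and> ((\<lambda>x. F2 x t) \<longlongrightarrow> 0) at_top \<and> ((\<lambda>x. F2 x t) \<longlongrightarrow> 0) at_bot)
      \<and> set_integrable lborel (UNIV \<times> {0..T}) (\<lambda>z::real\<times>real. pt e1 (fst z) (snd z))
      \<and> set_integrable lborel (UNIV \<times> {0..T}) (\<lambda>z::real\<times>real. pt e2 (fst z) (snd z))
      \<and> set_integrable lborel (UNIV \<times> {0..T}) (\<lambda>z::real\<times>real. px F1 (fst z) (snd z))
      \<and> set_integrable lborel (UNIV \<times> {0..T}) (\<lambda>z::real\<times>real. px F2 (fst z) (snd z)))"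

end

theory Submission
  imports Defs
begin



lemma Psi_zero_formula:
  assumes g: "\<gamma> > 1" and r: "r > 0"
  shows "Psi \<gamma> r 0 = r powr (\<gamma> - 1) / (\<gamma> - 1)"
proof -
  let ?f = "\<lambda>s::real. (s powr \<gamma> - 0 powr \<gamma>) / s\<^sup>2"
  let ?F = "\<lambda>s::real. s powr (\<gamma> - 1) / (\<gamma> - 1)"
  have "(LBINT s=ereal 0..ereal r. ?f s) = ?F r - 0"
  proof (rule interval_integral_FTC_nonneg(2))
    show "ereal 0 < ereal r" using r by simp
    fix x assume x: "ereal 0 < ereal x" "ereal x < ereal r"
    then have x0: "x > 0" by simp
    show "DERIV ?F x :> ?f x"
    proof -
      have "DERIV (\<lambda>s. s powr (\<gamma> - 1)) x :> (\<gamma> - 1) * x powr (\<gamma> - 1 - 1)"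
        using x0 by (intro has_real_derivative_powr) auto
      then have "DERIV ?F x :> (\<gamma> - 1) * x powr (\<gamma> - 1 - 1) / (\<gamma> - 1)"
        by (intro DERIV_cdivide)
      moreover have "(\<gamma> - 1) * x powr (\<gamma> - 1 - 1) / (\<gamma> - 1) = ?f x"
        using x0 g by (simp add: powr_diff)
      ultimately show ?thesis by simp
    qed
    show "isCont ?f x" using x0 by (intro continuous_intros) auto
  next
    show "AE x in lborel. ereal 0 < ereal x \<longrightarrow> ereal x < ereal r \<longrightarrow> 0 \<le> ?f x"
      by (auto intro!: AE_I2)
    have "(?F \<longlongrightarrow> ?F 0) (at_right 0)"
    proof -
      have "((\<lambda>s::real. s powr (\<gamma> - 1)) \<longlongrightarrow> 0 powr (\<gamma> - 1)) (at_right 0)"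
      proof (rule tendsto_powr')
        show "0 \<noteq> (0::real) \<or> (\<gamma> - 1 > 0 \<and> eventually (\<lambda>x. x \<ge> (0::real)) (at_right 0))"
          using g eventually_at_right_less[of "0::real"] by (auto elim: eventually_mono)
      qed (auto intro: tendsto_intros)
      from tendsto_divide[OF this tendsto_const, of "\<gamma> - 1"] show ?thesis using g by simp
    qed
    then show "((?F \<circ> real_of_ereal) \<longlongrightarrow> 0) (at_right (ereal 0))"
      unfolding ereal_tendsto_simps1 using g by simp
    have "isCont ?F r" using r g by (intro continuous_intros) auto
    then have "(?F \<longlongrightarrow> ?F r) (at_left r)"
      by (simp add: isCont_def filterlim_at_split)
    then show "((?F \<circ> real_of_ereal) \<longlongrightarrow> ?F r) (at_left (ereal r))"
      unfolding ereal_tendsto_simps1 .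
  qed
  then show ?thesis unfolding Psi_def by simp
qed

lemma Psi_deriv_pos:
  assumes g: "\<gamma> > 1" and rb: "rb > 0" and r: "r > 0"
  shows "DERIV (\<lambda>r. Psi \<gamma> r rb) r :> (r powr \<gamma> - rb powr \<gamma>) / r\<^sup>2"
proof -
  let ?f = "\<lambda>s::real. (s powr \<gamma> - rb powr \<gamma>) / s\<^sup>2"
  define a where "a = min rb r / 2"
  define b where "b = max rb r + 1"
  have a0: "a > 0" using rb r by (simp add: a_def)
  have cont: "continuous_on {a..b} ?f"
    using a0 by (intro continuous_intros) auto
  have "((\<lambda>u. LBINT y=rb..u. ?f y) has_vector_derivative (?f r)) (at r within {a..b})"
    by (rule interval_integral_FTC2[OF _ _ cont]) (use rb r in \<open>auto simp: a_def b_def\<close>)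
  then have "((\<lambda>u. LBINT y=rb..u. ?f y) has_vector_derivative (?f r)) (at r within {a<..<b})"
    by (rule has_vector_derivative_within_subset) auto
  then have "((\<lambda>u. LBINT y=rb..u. ?f y) has_vector_derivative (?f r)) (at r)"
    by (subst (asm) has_vector_derivative_within_open) (use rb r in \<open>auto simp: a_def b_def\<close>)
  then show ?thesis
    unfolding Psi_def has_real_derivative_iff_has_vector_derivative .
qed

lemma Psi_deriv:
  assumes g: "\<gamma> > 1" and rb: "rb \<ge> 0" and r: "r > 0"
  shows "DERIV (\<lambda>r. Psi \<gamma> r rb) r :> (r powr \<gamma> - rb powr \<gamma>) / r\<^sup>2"
proof (cases "rb = 0")
  case False
  then show ?thesis using Psi_deriv_pos[OF g _ r] rb by simp
next
  case True
  have d: "DERIV (\<lambda>s. s powr (\<gamma> - 1) / (\<gamma> - 1)) r :> (\<gamma> - 1) * r powr (\<gamma> - 1 - 1) / (\<gamma> - 1)"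
    using r by (intro DERIV_cdivide has_real_derivative_powr)
  have e: "(\<gamma> - 1) * r powr (\<gamma> - 1 - 1) / (\<gamma> - 1) = (r powr \<gamma> - rb powr \<gamma>) / r\<^sup>2"
    using r g True by (simp add: powr_diff)
  show ?thesis
    by (rule has_field_derivative_transform_within_open[OF d[unfolded e], of "{0<..}"])
       (use r g True Psi_zero_formula in auto)
qed

lemma Psi_nonneg:
  assumes g: "\<gamma> > 1" and rb: "rb \<ge> 0" and r: "r > 0"
  shows "Psi \<gamma> r rb \<ge> 0"
proof (cases "rb = 0")
  case True
  then show ?thesis using Psi_zero_formula[OF g r] g r by simp
next
  case False
  then have rb0: "rb > 0" using rb by simp
  have Pz: "Psi \<gamma> rb rb = 0" unfolding Psi_def by simp
  have D: "\<And>x. x > 0 \<Longrightarrow> DERIV (\<lambda>r. Psi \<gamma> r rb) x :> (x powr \<gamma> - rb powr \<gamma>) / x\<^sup>2"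
    using Psi_deriv[OF g rb] by blast
  consider "r = rb" | "r > rb" | "r < rb" by linarith
  then show ?thesis
  proof cases
    case 1 then show ?thesis using Pz by simp
  next
    case 2
    obtain z where z: "rb < z" "z < r" "Psi \<gamma> r rb - Psi \<gamma> rb rb = (r - rb) * ((z powr \<gamma> - rb powr \<gamma>) / z\<^sup>2)"
      using MVT2[OF 2, of "\<lambda>r. Psi \<gamma> r rb" "\<lambda>x. (x powr \<gamma> - rb powr \<gamma>) / x\<^sup>2"] D rb0 by force
    have "z powr \<gamma> \<ge> rb powr \<gamma>" using z rb0 g by (intro powr_mono2) auto
    then show ?thesis using z Pz 2 by simp
  next
    case 3
    obtain z where z: "r < z" "z < rb" "Psi \<gamma> rb rb - Psi \<gamma> r rb = (rb - r) * ((z powr \<gamma> - rb powr \<gamma>) / z\<^sup>2)"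
      using MVT2[OF 3, of "\<lambda>r. Psi \<gamma> r rb" "\<lambda>x. (x powr \<gamma> - rb powr \<gamma>) / x\<^sup>2"] D r by force
    have "z powr \<gamma> \<le> rb powr \<gamma>" using z r g by (intro powr_mono2) auto
    then have "(rb - r) * ((z powr \<gamma> - rb powr \<gamma>) / z\<^sup>2) \<le> 0"
      using 3 by (intro mult_nonneg_nonpos divide_nonpos_nonneg) auto
    then show ?thesis using z Pz by simp
  qed
qed



lemma sm_dx:
  assumes "smooth2 f"
  shows "((\<lambda>y. dop w f y t) has_real_derivative px (dop w f) x t) (at x)"
  using assms unfolding smooth2_def px_def
  using DERIV_deriv_iff_real_differentiable by blast

lemma sm_dt:
  assumes "smooth2 f"
  shows "((\<lambda>s. dop w f x s) has_real_derivative pt (dop w f) x t) (at t)"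
  using assms unfolding smooth2_def pt_def
  using DERIV_deriv_iff_real_differentiable by blast

lemma sm_cont:
  assumes "smooth2 f"
  shows "isCont (\<lambda>z. dop w f (fst z) (snd z)) z"
  using assms unfolding smooth2_def
  by (cases z) (simp add: continuous_on_eq_continuous_at)

lemma dist_pair_le: "dist (a::real, b::real) (c, d) \<le> \<bar>a - c\<bar> + \<bar>b - d\<bar>"
  unfolding dist_Pair_Pair dist_real_def using sqrt_sum_squares_le_sum_abs[of "a - c" "b - d"]
  by simp

lemma schwarz:
  assumes sm: "smooth2 f"
  shows "pt (px f) x t = px (pt f) x t"
proof (rule ccontr)
  let ?A = "\<lambda>z. pt (px f) (fst z) (snd z)"
  let ?B = "\<lambda>z. px (pt f) (fst z) (snd z)"
  assume ne: "pt (px f) x t \<noteq> px (pt f) x t"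
  define \<epsilon> where "\<epsilon> = \<bar>pt (px f) x t - px (pt f) x t\<bar> / 2"
  have e0: "\<epsilon> > 0" using ne by (simp add: \<epsilon>_def)
  have cA: "isCont ?A (x, t)" using sm_cont[OF sm, where w="[False, True]"] by simp
  have cB: "isCont ?B (x, t)" using sm_cont[OF sm, where w="[True, False]"] by simp
  obtain d1 where d1: "d1 > 0" "\<And>z. dist z (x, t) < d1 \<Longrightarrow> dist (?A z) (?A (x, t)) < \<epsilon>"
    using cA e0 unfolding continuous_at_eps_delta by (metis dist_commute)
  obtain d2 where d2: "d2 > 0" "\<And>z. dist z (x, t) < d2 \<Longrightarrow> dist (?B z) (?B (x, t)) < \<epsilon>"
    using cB e0 unfolding continuous_at_eps_delta by (metis dist_commute)
  define h where "h = min d1 d2 / 3"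
  have h0: "h > 0" using d1 d2 by (simp add: h_def)
  have dfx: "\<And>y s. ((\<lambda>y. f y s) has_real_derivative px f y s) (at y)"
    using sm_dx[OF sm, where w="[]"] by simp
  have dft: "\<And>y s. ((\<lambda>s. f y s) has_real_derivative pt f y s) (at s)"
    using sm_dt[OF sm, where w="[]"] by simp
  have dA: "\<And>y s. ((\<lambda>s. px f y s) has_real_derivative pt (px f) y s) (at s)"
    using sm_dt[OF sm, where w="[True]"] by simp
  have dB: "\<And>y s. ((\<lambda>y. pt f y s) has_real_derivative px (pt f) y s) (at y)"
    using sm_dx[OF sm, where w="[False]"] by simp
  define \<Delta> where "\<Delta> = f (x+h) (t+h) - f (x+h) t - f x (t+h) + f x t"
  have xh: "x < x + h" "t < t + h" using h0 by auto
  obtain \<xi> where \<xi>: "x < \<xi>" "\<xi> < x + h"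
    "(f (x+h) (t+h) - f (x+h) t) - (f x (t+h) - f x t) = (x + h - x) * (px f \<xi> (t+h) - px f \<xi> t)"
    using MVT2[OF xh(1), of "\<lambda>y. f y (t+h) - f y t" "\<lambda>y. px f y (t+h) - px f y t"]
      dfx by (force intro: derivative_intros)
  obtain \<tau> where \<tau>: "t < \<tau>" "\<tau> < t + h"
    "px f \<xi> (t+h) - px f \<xi> t = (t + h - t) * pt (px f) \<xi> \<tau>"
    using MVT2[OF xh(2), of "\<lambda>s. px f \<xi> s" "\<lambda>s. pt (px f) \<xi> s"] dA by force
  obtain \<tau>' where \<tau>': "t < \<tau>'" "\<tau>' < t + h"
    "(f (x+h) (t+h) - f x (t+h)) - (f (x+h) t - f x t) = (t + h - t) * (pt f (x+h) \<tau>' - pt f x \<tau>')"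
    using MVT2[OF xh(2), of "\<lambda>s. f (x+h) s - f x s" "\<lambda>s. pt f (x+h) s - pt f x s"]
      dft by (force intro: derivative_intros)
  obtain \<xi>' where \<xi>': "x < \<xi>'" "\<xi>' < x + h"
    "pt f (x+h) \<tau>' - pt f x \<tau>' = (x + h - x) * px (pt f) \<xi>' \<tau>'"
    using MVT2[OF xh(1), of "\<lambda>y. pt f y \<tau>'" "\<lambda>y. px (pt f) y \<tau>'"] dB by force
  have "h * (h * pt (px f) \<xi> \<tau>) = h * (h * px (pt f) \<xi>' \<tau>')"
    using \<xi>(3) \<tau>(3) \<tau>'(3) \<xi>'(3) by (simp add: algebra_simps)
  then have eq: "pt (px f) \<xi> \<tau> = px (pt f) \<xi>' \<tau>'" using h0 by simp
  have "dist (\<xi>, \<tau>) (x, t) < d1"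
    using dist_pair_le[of \<xi> \<tau> x t] \<xi> \<tau> h0 by (simp add: h_def) linarith
  then have a: "\<bar>pt (px f) \<xi> \<tau> - pt (px f) x t\<bar> < \<epsilon>" using d1(2) by (force simp: dist_real_def)
  have "dist (\<xi>', \<tau>') (x, t) < d2"
    using dist_pair_le[of \<xi>' \<tau>' x t] \<xi>' \<tau>' h0 by (simp add: h_def) linarith
  then have b: "\<bar>px (pt f) \<xi>' \<tau>' - px (pt f) x t\<bar> < \<epsilon>" using d2(2) by (force simp: dist_real_def)
  have tri: "\<And>X a b::real. \<bar>X - a\<bar> < \<bar>a - b\<bar> / 2 \<Longrightarrow> \<bar>X - b\<bar> < \<bar>a - b\<bar> / 2 \<Longrightarrow> False"
    by (simp add: abs_if split: if_splits)
  show False using tri[of "pt (px f) \<xi> \<tau>" "pt (px f) x t" "px (pt f) x t"] a b eq unfolding \<epsilon>_def by simp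
qed



lemma integral_deriv_zero:
  fixes F f :: "real \<Rightarrow> real"
  assumes d: "\<And>x. (F has_real_derivative f x) (at x)" and c: "\<And>x. isCont f x"
    and i: "integrable lborel f" and t: "(F \<longlongrightarrow> 0) at_top" and b: "(F \<longlongrightarrow> 0) at_bot"
  shows "integral\<^sup>L lborel f = 0"
proof -
  have "(LBINT x=-\<infinity>..\<infinity>. f x) = 0 - 0"
  proof (rule interval_integral_FTC_integrable[where F=F])
    show "set_integrable lborel (einterval (- \<infinity>) \<infinity>) f"
      using i by (simp add: set_integrable_def)
    show "((F \<circ> real_of_ereal) \<longlongrightarrow> 0) (at_right (- \<infinity>))"
      using b by (simp add: ereal_tendsto_simps1)
    show "((F \<circ> real_of_ereal) \<longlongrightarrow> 0) (at_left \<infinity>)"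
      using t by (simp add: ereal_tendsto_simps1)
  qed (use d c in \<open>auto simp: has_real_derivative_iff_has_vector_derivative\<close>)
  then show ?thesis
    by (simp add: interval_lebesgue_integral_def set_lebesgue_integral_def)
qed

lemma balance:
  fixes e g F h D :: "real \<Rightarrow> real \<Rightarrow> real" and T t :: real
  assumes t: "0 \<le> t" "t \<le> T"
  and de: "\<And>x s. s \<in> {0..T} \<Longrightarrow> ((\<lambda>s. e x s) has_real_derivative g x s) (at s)"
  and dF: "\<And>x s. s \<in> {0..T} \<Longrightarrow> ((\<lambda>x. F x s) has_real_derivative h x s) (at x)"
  and hc: "\<And>x s. s \<in> {0..T} \<Longrightarrow> isCont (\<lambda>x. h x s) x"
  and eq: "\<And>x s. s \<in> {0..T} \<Longrightarrow> g x s + h x s = - D x s"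
  and D0: "\<And>x s. s \<in> {0..T} \<Longrightarrow> 0 \<le> D x s"
  and e0: "\<And>x s. s \<in> {0..T} \<Longrightarrow> 0 \<le> e x s"
  and Flim: "\<And>s. s \<in> {0..T} \<Longrightarrow> ((\<lambda>x. F x s) \<longlongrightarrow> 0) at_top \<and> ((\<lambda>x. F x s) \<longlongrightarrow> 0) at_bot"
  and ig: "set_integrable lborel (UNIV \<times> {0..T}) (\<lambda>z. g (fst z) (snd z))"
  and ih: "set_integrable lborel (UNIV \<times> {0..T}) (\<lambda>z. h (fst z) (snd z))"
  and em: "\<And>s. s \<in> {0..T} \<Longrightarrow> (\<lambda>x. e x s) \<in> borel_measurable lborel"
  and fin: "(\<integral>\<^sup>+x. ennreal (e x 0) \<partial>lborel) < \<infinity>"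
  shows "(\<integral>\<^sup>+x. ennreal (e x t) \<partial>lborel) + (\<integral>\<^sup>+s\<in>{0..t}. (\<integral>\<^sup>+x. ennreal (D x s) \<partial>lborel) \<partial>lborel)
         = (\<integral>\<^sup>+x. ennreal (e x 0) \<partial>lborel)"
proof -
  define G where "G = (\<lambda>x s. indicator {0..t} s * g x s)"
  define H where "H = (\<lambda>x s. indicator {0..t} s * h x s)"
  define DD where "DD = (\<lambda>x s. indicator {0..t} s * D x s)"
  have tT: "\<And>s. s \<in> {0..t} \<Longrightarrow> s \<in> {0..T}" using t by auto
  have sS: "UNIV \<times> {0..t} \<in> sets (lborel :: (real \<times> real) measure)" by (simp, intro borel_closed closed_Times) auto
  have sub: "UNIV \<times> {0..t} \<subseteq> UNIV \<times> {0..T}" using t by auto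
  have IG: "integrable (lborel \<Otimes>\<^sub>M lborel) (case_prod G)"
  proof -
    have "set_integrable lborel (UNIV \<times> {0..t}) (\<lambda>z. g (fst z) (snd z))"
      by (rule set_integrable_subset[OF ig sS sub])
    moreover have "(\<lambda>z::real\<times>real. indicator (UNIV \<times> {0..t}) z *\<^sub>R g (fst z) (snd z)) = case_prod G"
      by (auto simp: G_def split: split_indicator)
    ultimately show ?thesis by (simp add: set_integrable_def lborel_prod)
  qed
  have IH: "integrable (lborel \<Otimes>\<^sub>M lborel) (case_prod H)"
  proof -
    have "set_integrable lborel (UNIV \<times> {0..t}) (\<lambda>z. h (fst z) (snd z))"
      by (rule set_integrable_subset[OF ih sS sub])
    moreover have "(\<lambda>z::real\<times>real. indicator (UNIV \<times> {0..t}) z *\<^sub>R h (fst z) (snd z)) = case_prod H"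
      by (auto simp: H_def split: split_indicator)
    ultimately show ?thesis by (simp add: set_integrable_def lborel_prod)
  qed
  have DDeq: "case_prod DD = (\<lambda>z. - (case_prod G z + case_prod H z))"
  proof (rule ext, clarify)
    fix x s
    show "DD x s = - (G x s + H x s)"
    proof (cases "s \<in> {0..t}")
      case True
      then have "g x s + h x s = - D x s" using eq tT by blast
      then show ?thesis using True by (simp add: DD_def G_def H_def algebra_simps)
    qed (simp add: DD_def G_def H_def)
  qed
  have IDD: "integrable (lborel \<Otimes>\<^sub>M lborel) (case_prod DD)"
    unfolding DDeq using IG IH by auto
  have DDnn: "\<And>x s. 0 \<le> DD x s"
    using D0 tT by (auto simp: DD_def split: split_indicator)
  have Hzero: "\<And>s. (\<integral>x. H x s \<partial>lborel) = 0"
  proof -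
    fix s
    show "(\<integral>x. H x s \<partial>lborel) = 0"
    proof (cases "s \<in> {0..t}")
      case False then show ?thesis by (simp add: H_def)
    next
      case True
      then have sT: "s \<in> {0..T}" using tT by blast
      have Hs: "(\<lambda>x. H x s) = (\<lambda>x. h x s)" using True by (simp add: H_def)
      show ?thesis
      proof (cases "integrable lborel (\<lambda>x. h x s)")
        case True
        show ?thesis unfolding Hs
          by (rule integral_deriv_zero[where F="\<lambda>x. F x s" and f="\<lambda>x. h x s"]) (use True dF hc Flim sT in auto)
      next
        case False then show ?thesis unfolding Hs by (simp add: not_integrable_integral_eq)
      qed
    qed
  qed
  have intH: "integral\<^sup>L (lborel \<Otimes>\<^sub>M lborel) (case_prod H) = 0"
    using lborel_pair.integral_snd[OF IH] Hzero by simp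
  have Gx: "\<And>x. integrable lborel (\<lambda>s. G x s) \<Longrightarrow> (\<integral>s. G x s \<partial>lborel) = e x t - e x 0"
  proof -
    fix x assume i: "integrable lborel (\<lambda>s. G x s)"
    have si: "set_integrable lborel {0..t} (g x)"
    proof -
      have "(\<lambda>s. indicator {0..t} s *\<^sub>R g x s) = (\<lambda>s. G x s)" by (simp add: G_def)
      then show ?thesis using i by (simp add: set_integrable_def)
    qed
    have "(g x has_integral (e x t - e x 0)) {0..t}"
    proof (rule fundamental_theorem_of_calculus[OF t(1)])
      fix s assume "s \<in> {0..t}"
      then have "s \<in> {0..T}" using tT by blast
      then show "((\<lambda>s. e x s) has_vector_derivative g x s) (at s within {0..t})"
        using de[of s x] by (simp add: has_real_derivative_iff_has_vector_derivative has_vector_derivative_at_within)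
    qed
    then have "integral {0..t} (g x) = e x t - e x 0" by (rule integral_unique)
    moreover have "(LINT s:{0..t}|lborel. g x s) = integral {0..t} (g x)"
      by (rule set_borel_integral_eq_integral(2)[OF si])
    ultimately show "(\<integral>s. G x s \<partial>lborel) = e x t - e x 0"
      by (simp add: set_lebesgue_integral_def G_def)
  qed
  have AEG: "AE x in lborel. (\<integral>s. G x s \<partial>lborel) = e x t - e x 0"
    using lborel_pair.AE_integrable_fst[OF IG] by eventually_elim (rule Gx)
  have mt: "(\<lambda>x. e x t) \<in> borel_measurable lborel" using em t by auto
  have m0: "(\<lambda>x. e x 0) \<in> borel_measurable lborel" using em t by auto
  have intdiff: "integrable lborel (\<lambda>x. e x t - e x 0)"
  proof (rule integrable_cong_AE_imp[OF lborel_pair.integrable_fst[OF IG]])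
    show "(\<lambda>x. e x t - e x 0) \<in> borel_measurable lborel" using mt m0 by measurable
    show "AE x in lborel. (\<integral>s. G x s \<partial>lborel) = e x t - e x 0" by (rule AEG)
  qed
  have intG: "integral\<^sup>L (lborel \<Otimes>\<^sub>M lborel) (case_prod G) = (\<integral>x. e x t - e x 0 \<partial>lborel)"
  proof -
    have "integral\<^sup>L (lborel \<Otimes>\<^sub>M lborel) (case_prod G) = (\<integral>x. (\<integral>s. G x s \<partial>lborel) \<partial>lborel)"
      using lborel_pair.integral_fst[OF IG] by simp
    also have "\<dots> = (\<integral>x. e x t - e x 0 \<partial>lborel)"
      by (rule integral_cong_AE) (use AEG lborel_pair.integrable_fst[OF IG] mt m0 in auto)
    finally show ?thesis .
  qed
  have i0: "integrable lborel (\<lambda>x. e x 0)"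
    by (rule integrableI_nonneg[OF m0]) (use e0 t fin in auto)
  have it: "integrable lborel (\<lambda>x. e x t)"
  proof -
    have "integrable lborel (\<lambda>x. (e x t - e x 0) + e x 0)" using Bochner_Integration.integrable_add[OF intdiff i0] by simp
    then show ?thesis by simp
  qed
  have intDD: "integral\<^sup>L (lborel \<Otimes>\<^sub>M lborel) (case_prod DD) = (\<integral>x. e x 0 \<partial>lborel) - (\<integral>x. e x t \<partial>lborel)"
  proof -
    have "integral\<^sup>L (lborel \<Otimes>\<^sub>M lborel) (case_prod DD)
        = - (integral\<^sup>L (lborel \<Otimes>\<^sub>M lborel) (case_prod G) + integral\<^sup>L (lborel \<Otimes>\<^sub>M lborel) (case_prod H))"
      unfolding DDeq using IG IH by simp
    also have "\<dots> = - (\<integral>x. e x t - e x 0 \<partial>lborel)" using intG intH by simp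
    also have "\<dots> = (\<integral>x. e x 0 \<partial>lborel) - (\<integral>x. e x t \<partial>lborel)"
      using it i0 by simp
    finally show ?thesis .
  qed
  have nnDD: "(\<integral>\<^sup>+s\<in>{0..t}. (\<integral>\<^sup>+x. ennreal (D x s) \<partial>lborel) \<partial>lborel)
      = ennreal (integral\<^sup>L (lborel \<Otimes>\<^sub>M lborel) (case_prod DD))"
  proof -
    have "\<And>s. (\<integral>\<^sup>+x. ennreal (D x s) \<partial>lborel) * indicator {0..t} s = (\<integral>\<^sup>+x. ennreal (DD x s) \<partial>lborel)"
      by (auto simp: DD_def split: split_indicator)
    then have "(\<integral>\<^sup>+s\<in>{0..t}. (\<integral>\<^sup>+x. ennreal (D x s) \<partial>lborel) \<partial>lborel)
        = (\<integral>\<^sup>+s. (\<integral>\<^sup>+x. ennreal (DD x s) \<partial>lborel) \<partial>lborel)" by simp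
    also have "\<dots> = (\<integral>\<^sup>+z. ennreal (case_prod DD z) \<partial>(lborel \<Otimes>\<^sub>M lborel))"
      using lborel_pair.nn_integral_snd[of "\<lambda>z. ennreal (case_prod DD z)"] IDD by simp
    also have "\<dots> = ennreal (integral\<^sup>L (lborel \<Otimes>\<^sub>M lborel) (case_prod DD))"
      by (rule nn_integral_eq_integral[OF IDD]) (use DDnn in auto)
    finally show ?thesis .
  qed
  have nnt: "(\<integral>\<^sup>+x. ennreal (e x t) \<partial>lborel) = ennreal (\<integral>x. e x t \<partial>lborel)"
    by (rule nn_integral_eq_integral[OF it]) (use e0 t in auto)
  have nn0: "(\<integral>\<^sup>+x. ennreal (e x 0) \<partial>lborel) = ennreal (\<integral>x. e x 0 \<partial>lborel)"
    by (rule nn_integral_eq_integral[OF i0]) (use e0 t in auto)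
  have p1: "(\<integral>x. e x t \<partial>lborel) \<ge> 0" using e0 t by (intro integral_nonneg_AE) auto
  have p2: "integral\<^sup>L (lborel \<Otimes>\<^sub>M lborel) (case_prod DD) \<ge> 0"
    using DDnn by (intro integral_nonneg_AE) auto
  show ?thesis
    unfolding nnDD nnt nn0 using p1 p2 intDD
    by (simp add: ennreal_plus[symmetric] del: ennreal_plus)
qed



definition Gp :: "real \<Rightarrow> real \<Rightarrow> real \<Rightarrow> real" where
  "Gp \<gamma> rb r = Psi \<gamma> r rb + (r powr \<gamma> - rb powr \<gamma>) / r"

lemma G_deriv:
  assumes g: "\<gamma> > 1" and rb: "rb \<ge> 0" and r: "r > 0"
  shows "DERIV (\<lambda>r. r * Psi \<gamma> r rb) r :> Gp \<gamma> rb r"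
proof -
  have "DERIV (\<lambda>r. r * Psi \<gamma> r rb) r :> 1 * Psi \<gamma> r rb + ((r powr \<gamma> - rb powr \<gamma>) / r\<^sup>2) * r"
    by (rule DERIV_mult[OF DERIV_ident Psi_deriv[OF g rb r]])
  moreover have "1 * Psi \<gamma> r rb + ((r powr \<gamma> - rb powr \<gamma>) / r\<^sup>2) * r = Gp \<gamma> rb r"
    using r by (simp add: Gp_def power2_eq_square)
  ultimately show ?thesis by simp
qed

lemma px_eq: "((\<lambda>y. f y s) has_real_derivative D) (at x) \<Longrightarrow> px f x s = D"
  by (simp add: px_def DERIV_imp_deriv)
lemma pt_eq: "((\<lambda>s. f x s) has_real_derivative D) (at s) \<Longrightarrow> pt f x s = D"
  by (simp add: pt_def DERIV_imp_deriv)

lemma alg1: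
  fixes r rx U ux uxx rt ut P P1 A A1 S Pb \<gamma> \<alpha> :: real
  assumes r: "r > 0" and rt: "rt = -(rx*U + r*ux)"
    and m: "rt*U + r*ut + rx*U^2 + 2*r*U*ux + \<gamma>*P1*rx = \<alpha>*A1*rx*ux + A*uxx"
  shows "(rt*U^2/2 + r*U*ut + (S + (P - Pb)/r)*rt)
       + (rx*U^3/2 + r*(3*U^2*ux)/2 + ux*(r*S + P - Pb) + U*((S + (P - Pb)/r)*rx + \<gamma>*P1*rx)
          - (\<alpha>*A1*rx*U*ux + A*ux*ux + A*U*uxx)) = -(A*ux^2)"
proof -
  have rut: "r*ut = \<alpha>*A1*rx*ux + A*uxx - rt*U - rx*U^2 - 2*r*U*ux - \<gamma>*P1*rx" using m by linarith
  have "r*U*ut = U*(r*ut)" by simp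
  also have "\<dots> = U*(\<alpha>*A1*rx*ux + A*uxx - rt*U - rx*U^2 - 2*r*U*ux - \<gamma>*P1*rx)" by (simp add: rut)
  finally have e: "r*U*ut = U*(\<alpha>*A1*rx*ux + A*uxx - rt*U - rx*U^2 - 2*r*U*ux - \<gamma>*P1*rx)" .
  show ?thesis unfolding e rt using r by (simp add: field_simps power2_eq_square power3_eq_cube)
qed

lemma alg2:
  fixes r rx rxx U ux uxx rt rxt ut P P1 A A1 B B1 S Pb \<gamma> \<alpha> :: real
  assumes r: "r > 0" and rt: "rt = -(rx*U + r*ux)" and rxt: "rxt = -(rxx*U + 2*rx*ux + r*uxx)"
    and m: "rt*U + r*ut + rx*U^2 + 2*r*U*ux + \<gamma>*P1*rx = \<alpha>*A1*rx*ux + A*uxx"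
    and A: "A = r*A1" and A1: "A1 = r*B" and B: "B = r*B1"
  shows "(rt*(U + B*rx)^2/2 + r*(U + B*rx)*(ut + (\<alpha>-2)*B1*rt*rx + B*rxt) + (S + (P - Pb)/r)*rt)
       + ((rx*U + r*ux)*(U + B*rx)^2/2 + r*U*(U + B*rx)*(ux + (\<alpha>-2)*B1*rx*rx + B*rxx)
          + ux*(r*S + P - Pb) + U*((S + (P - Pb)/r)*rx + \<gamma>*P1*rx)) = -(\<gamma>*P1*B*rx^2)"
proof -
  have k: "r*((ut + (\<alpha>-2)*B1*rt*rx + B*rxt) + U*(ux + (\<alpha>-2)*B1*rx*rx + B*rxx)) = -(\<gamma>*P1*rx)"
  proof -
    have rut: "r*ut = \<alpha>*A1*rx*ux + A*uxx - rt*U - rx*U^2 - 2*r*U*ux - \<gamma>*P1*rx" using m by linarith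
    have "r*((ut + (\<alpha>-2)*B1*rt*rx + B*rxt) + U*(ux + (\<alpha>-2)*B1*rx*rx + B*rxx))
       = r*ut + r*U*ux + (\<alpha>-2)*(r*B1)*rx*(rt + U*rx) + (r*B)*(rxt + U*rxx)"
      by (simp add: algebra_simps power2_eq_square)
    also have "\<dots> = -(\<gamma>*P1*rx)"
      unfolding rut rt rxt B[symmetric] A A1 by (simp add: algebra_simps power2_eq_square)
    finally show ?thesis .
  qed
  have l: "(S + (P - Pb)/r)*rt + ux*(r*S + P - Pb) + U*((S + (P - Pb)/r)*rx + \<gamma>*P1*rx) = \<gamma>*P1*rx*U"
    unfolding rt using r by (simp add: field_simps)
  have "(rt*(U + B*rx)^2/2 + r*(U + B*rx)*(ut + (\<alpha>-2)*B1*rt*rx + B*rxt) + (S + (P - Pb)/r)*rt)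
       + ((rx*U + r*ux)*(U + B*rx)^2/2 + r*U*(U + B*rx)*(ux + (\<alpha>-2)*B1*rx*rx + B*rxx)
          + ux*(r*S + P - Pb) + U*((S + (P - Pb)/r)*rx + \<gamma>*P1*rx))
     = (rt + (rx*U + r*ux))*(U + B*rx)^2/2
       + (U + B*rx) * (r*((ut + (\<alpha>-2)*B1*rt*rx + B*rxt) + U*(ux + (\<alpha>-2)*B1*rx*rx + B*rxx)))
       + ((S + (P - Pb)/r)*rt + ux*(r*S + P - Pb) + U*((S + (P - Pb)/r)*rx + \<gamma>*P1*rx))"
    by (simp add: algebra_simps)
  also have "\<dots> = (U + B*rx) * (-(\<gamma>*P1*rx)) + \<gamma>*P1*rx*U"
    unfolding k l by (simp add: rt)
  also have "\<dots> = -(\<gamma>*P1*B*rx^2)" by (simp add: algebra_simps power2_eq_square)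
  finally show ?thesis .
qed


lemma pw: "r > 0 \<Longrightarrow> r powr c = r * r powr (c - 1)" for r c :: real
  by (simp add: powr_diff)

locale nsc =
  fixes \<alpha> \<gamma> rb T :: real and \<rho> u :: "real \<Rightarrow> real \<Rightarrow> real"
  assumes g1: "\<gamma> > 1" and a0: "0 < \<alpha>" and a1: "\<alpha> < 1/2" and rb: "rb \<ge> 0"
    and sr: "smooth2 \<rho>" and su: "smooth2 u"
    and pos: "\<And>x t. t \<in> {0..T} \<Longrightarrow> \<rho> x t > 0"
    and ns: "NS_solution \<alpha> \<gamma> T \<rho> u"
begin

lemma rX: "((\<lambda>y. \<rho> y s) has_real_derivative px \<rho> x s) (at x)"
  using sm_dx[OF sr, where w="[]"] by simp
lemma rXX: "((\<lambda>y. px \<rho> y s) has_real_derivative px (px \<rho>) x s) (at x)"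
  using sm_dx[OF sr, where w="[True]"] by simp
lemma uX: "((\<lambda>y. u y s) has_real_derivative px u x s) (at x)"
  using sm_dx[OF su, where w="[]"] by simp
lemma uXX: "((\<lambda>y. px u y s) has_real_derivative px (px u) x s) (at x)"
  using sm_dx[OF su, where w="[True]"] by simp
lemma rT: "((\<lambda>s. \<rho> x s) has_real_derivative pt \<rho> x s) (at s)"
  using sm_dt[OF sr, where w="[]"] by simp
lemma rXT: "((\<lambda>s. px \<rho> x s) has_real_derivative pt (px \<rho>) x s) (at s)"
  using sm_dt[OF sr, where w="[True]"] by simp
lemma uT: "((\<lambda>s. u x s) has_real_derivative pt u x s) (at s)"
  using sm_dt[OF su, where w="[]"] by simp

lemma GX: "s \<in> {0..T} \<Longrightarrow> ((\<lambda>y. Gd \<gamma> rb \<rho> y s) has_real_derivative Gp \<gamma> rb (\<rho> x s) * px \<rho> x s) (at x)"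
  unfolding Gd_def using DERIV_chain2[OF G_deriv[OF g1 rb pos] rX] by simp
lemma GT: "s \<in> {0..T} \<Longrightarrow> ((\<lambda>s. Gd \<gamma> rb \<rho> x s) has_real_derivative Gp \<gamma> rb (\<rho> x s) * pt \<rho> x s) (at s)"
  unfolding Gd_def using DERIV_chain2[OF G_deriv[OF g1 rb pos] rT] by simp

lemma PX: "s \<in> {0..T} \<Longrightarrow> ((\<lambda>y. \<rho> y s powr c) has_real_derivative c * \<rho> x s powr (c - 1) * px \<rho> x s) (at x)"
  using DERIV_fun_powr[OF rX pos] by simp
lemma PT: "s \<in> {0..T} \<Longrightarrow> ((\<lambda>s. \<rho> x s powr c) has_real_derivative c * \<rho> x s powr (c - 1) * pt \<rho> x s) (at s)"
  using DERIV_fun_powr[OF rT pos] by simp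

lemma pxprod: "px (\<lambda>x t. \<rho> x t * u x t) x s = px \<rho> x s * u x s + \<rho> x s * px u x s"
proof -
  have "((\<lambda>y. \<rho> y s * u y s) has_real_derivative px \<rho> x s * u x s + px u x s * \<rho> x s) (at x)"
    by (rule DERIV_mult[OF rX uX])
  then show ?thesis unfolding px_def[of "\<lambda>x t. \<rho> x t * u x t"] by (simp add: DERIV_imp_deriv mult.commute)
qed

lemma NSeqs:
  assumes "s \<in> {0..T}"
  shows "pt \<rho> x s + px (\<lambda>x t. \<rho> x t * u x t) x s = 0"
    and "pt (\<lambda>x t. \<rho> x t * u x t) x s
          + px (\<lambda>x t. \<rho> x t * (u x t)\<^sup>2 + \<rho> x t powr \<gamma>) x s
        = px (\<lambda>x t. \<rho> x t powr \<alpha> * px u x t) x s"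
  using ns assms unfolding NS_solution_def by blast+

lemma N1: "s \<in> {0..T} \<Longrightarrow> pt \<rho> x s = - (px \<rho> x s * u x s + \<rho> x s * px u x s)"
  using NSeqs(1)[of s x] pxprod[of x s] by linarith

lemma N2: "s \<in> {0..T} \<Longrightarrow> pt \<rho> x s * u x s + \<rho> x s * pt u x s + px \<rho> x s * (u x s)\<^sup>2
   + 2 * \<rho> x s * u x s * px u x s + \<gamma> * \<rho> x s powr (\<gamma> - 1) * px \<rho> x s
   = \<alpha> * \<rho> x s powr (\<alpha> - 1) * px \<rho> x s * px u x s + \<rho> x s powr \<alpha> * px (px u) x s"
proof -
  assume s: "s \<in> {0..T}"
  have 1: "pt (\<lambda>x t. \<rho> x t * u x t) x s = pt \<rho> x s * u x s + \<rho> x s * pt u x s"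
    by (rule pt_eq) (rule derivative_eq_intros rT uT refl | simp)+
  have 2: "px (\<lambda>x t. \<rho> x t * (u x t)\<^sup>2 + \<rho> x t powr \<gamma>) x s
      = px \<rho> x s * (u x s)\<^sup>2 + 2 * \<rho> x s * u x s * px u x s + \<gamma> * \<rho> x s powr (\<gamma> - 1) * px \<rho> x s"
    by (rule px_eq) (rule derivative_eq_intros rX uX PX[OF s] refl | simp)+
  have 3: "px (\<lambda>x t. \<rho> x t powr \<alpha> * px u x t) x s
      = \<alpha> * \<rho> x s powr (\<alpha> - 1) * px \<rho> x s * px u x s + \<rho> x s powr \<alpha> * px (px u) x s"
    by (rule px_eq) (rule derivative_eq_intros uXX PX[OF s] refl | simp)+
  show ?thesis using NSeqs(2)[OF s, of x] 1 2 3 by simp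
qed


lemma N3: "s \<in> {0..T} \<Longrightarrow> pt (px \<rho>) x s = -(px (px \<rho>) x s * u x s + 2 * px \<rho> x s * px u x s + \<rho> x s * px (px u) x s)"
proof -
  assume s: "s \<in> {0..T}"
  have fe: "(\<lambda>y. pt \<rho> y s) = (\<lambda>y. - (px \<rho> y s * u y s + \<rho> y s * px u y s))"
    using N1[OF s] by auto
  have "px (pt \<rho>) x s = -(px (px \<rho>) x s * u x s + 2 * px \<rho> x s * px u x s + \<rho> x s * px (px u) x s)"
    by (rule px_eq, unfold fe) (rule derivative_eq_intros rX uX rXX uXX refl | simp)+
  then show ?thesis using schwarz[OF sr] by simp
qed

definition "e1 = (\<lambda>x t. \<rho> x t * (u x t)\<^sup>2 / 2 + Gd \<gamma> rb \<rho> x t)"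
definition "e2 = (\<lambda>x t. \<rho> x t * (BDv \<alpha> \<rho> u x t)\<^sup>2 / 2 + Gd \<gamma> rb \<rho> x t)"
definition "F1 = (\<lambda>x t. \<rho> x t * (u x t)^3 / 2
                    + u x t * (Gd \<gamma> rb \<rho> x t + \<rho> x t powr \<gamma> - rb powr \<gamma>)
                    - \<rho> x t powr \<alpha> * u x t * px u x t)"
definition "F2 = (\<lambda>x t. \<rho> x t * u x t * (BDv \<alpha> \<rho> u x t)\<^sup>2 / 2
                    + u x t * (Gd \<gamma> rb \<rho> x t + \<rho> x t powr \<gamma> - rb powr \<gamma>))"

definition "G1 x s = pt \<rho> x s * (u x s)^2/2 + \<rho> x s * u x s * pt u x s + Gp \<gamma> rb (\<rho> x s) * pt \<rho> x s"
definition "Vt x s = pt u x s + (\<alpha> - 2) * \<rho> x s powr (\<alpha> - 2 - 1) * pt \<rho> x s * px \<rho> x s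
   + \<rho> x s powr (\<alpha> - 2) * pt (px \<rho>) x s"
definition "G2 x s = pt \<rho> x s * (BDv \<alpha> \<rho> u x s)^2/2 + \<rho> x s * BDv \<alpha> \<rho> u x s * Vt x s
   + Gp \<gamma> rb (\<rho> x s) * pt \<rho> x s"
definition "H1 x s = px \<rho> x s * (u x s)^3/2 + \<rho> x s * (3 * (u x s)^2 * px u x s)/2
   + px u x s * (Gd \<gamma> rb \<rho> x s + \<rho> x s powr \<gamma> - rb powr \<gamma>)
   + u x s * (Gp \<gamma> rb (\<rho> x s) * px \<rho> x s + \<gamma> * \<rho> x s powr (\<gamma> - 1) * px \<rho> x s)
   - (\<alpha> * \<rho> x s powr (\<alpha> - 1) * px \<rho> x s * u x s * px u x s + \<rho> x s powr \<alpha> * px u x s * px u x s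
      + \<rho> x s powr \<alpha> * u x s * px (px u) x s)"
definition "Vx x s = px u x s + (\<alpha> - 2) * \<rho> x s powr (\<alpha> - 2 - 1) * px \<rho> x s * px \<rho> x s
   + \<rho> x s powr (\<alpha> - 2) * px (px \<rho>) x s"
definition "H2 x s = (px \<rho> x s * u x s + \<rho> x s * px u x s) * (BDv \<alpha> \<rho> u x s)^2/2
   + \<rho> x s * u x s * BDv \<alpha> \<rho> u x s * Vx x s
   + px u x s * (Gd \<gamma> rb \<rho> x s + \<rho> x s powr \<gamma> - rb powr \<gamma>)
   + u x s * (Gp \<gamma> rb (\<rho> x s) * px \<rho> x s + \<gamma> * \<rho> x s powr (\<gamma> - 1) * px \<rho> x s)"

lemma e1T: "s \<in> {0..T} \<Longrightarrow> ((\<lambda>s. e1 x s) has_real_derivative G1 x s) (at s)"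
  unfolding e1_def G1_def
  by (rule derivative_eq_intros rT uT GT refl | simp)+

lemma BDvT: "s \<in> {0..T} \<Longrightarrow> ((\<lambda>s. BDv \<alpha> \<rho> u x s) has_real_derivative Vt x s) (at s)"
  unfolding BDv_def Vt_def
  by (rule derivative_eq_intros rT uT rXT PT refl | simp)+

lemma BDvX: "s \<in> {0..T} \<Longrightarrow> ((\<lambda>y. BDv \<alpha> \<rho> u y s) has_real_derivative Vx x s) (at x)"
  unfolding BDv_def Vx_def
  by (rule derivative_eq_intros rX uX rXX PX refl | simp)+

lemma e2T: "s \<in> {0..T} \<Longrightarrow> ((\<lambda>s. e2 x s) has_real_derivative G2 x s) (at s)"
  unfolding e2_def G2_def
  by (rule derivative_eq_intros rT BDvT GT refl | simp)+

lemma F1X: "s \<in> {0..T} \<Longrightarrow> ((\<lambda>y. F1 y s) has_real_derivative H1 x s) (at x)"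
  unfolding F1_def H1_def
  apply (rule derivative_eq_intros rX uX uXX GX PX refl | simp add: pos)+
  apply (simp add: field_simps power2_eq_square power3_eq_cube)
  done

lemma F2X: "s \<in> {0..T} \<Longrightarrow> ((\<lambda>y. F2 y s) has_real_derivative H2 x s) (at x)"
  unfolding F2_def H2_def
  by (rule derivative_eq_intros rX uX BDvX GX PX refl | simp add: pos)+


lemma I1: "s \<in> {0..T} \<Longrightarrow> G1 x s + H1 x s = -(\<rho> x s powr \<alpha> * (px u x s)\<^sup>2)"
proof -
  assume s: "s \<in> {0..T}"
  show ?thesis
    unfolding G1_def H1_def Gp_def Gd_def
    by (rule alg1[OF pos[OF s] N1[OF s] N2[OF s]])
qed

lemma I2: "s \<in> {0..T} \<Longrightarrow> G2 x s + H2 x s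
   = -(\<gamma> * \<rho> x s powr (\<gamma> - 1) * \<rho> x s powr (\<alpha> - 2) * (px \<rho> x s)\<^sup>2)"
proof -
  assume s: "s \<in> {0..T}"
  have r: "\<rho> x s > 0" using pos[OF s] .
  have A: "\<rho> x s powr \<alpha> = \<rho> x s * \<rho> x s powr (\<alpha> - 1)" by (rule pw[OF r])
  have A1: "\<rho> x s powr (\<alpha> - 1) = \<rho> x s * \<rho> x s powr (\<alpha> - 2)"
    using pw[OF r, of "\<alpha> - 1"] by simp
  have B: "\<rho> x s powr (\<alpha> - 2) = \<rho> x s * \<rho> x s powr (\<alpha> - 2 - 1)" by (rule pw[OF r])
  show ?thesis
    unfolding G2_def H2_def Gp_def Gd_def Vt_def Vx_def BDv_def
    by (rule alg2[OF r N1[OF s] N3[OF s] N2[OF s] A A1 B])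
qed


lemma rXXX: "((\<lambda>y. px (px \<rho>) y s) has_real_derivative px (px (px \<rho>)) x s) (at x)"
  using sm_dx[OF sr, where w="[True, True]"] by simp
lemma uXXX: "((\<lambda>y. px (px u) y s) has_real_derivative px (px (px u)) x s) (at x)"
  using sm_dx[OF su, where w="[True, True]"] by simp

lemma cr: "isCont (\<lambda>y. \<rho> y s) x" using DERIV_isCont[OF rX] .
lemma crx: "isCont (\<lambda>y. px \<rho> y s) x" using DERIV_isCont[OF rXX] .
lemma crxx: "isCont (\<lambda>y. px (px \<rho>) y s) x" using DERIV_isCont[OF rXXX] .
lemma cu: "isCont (\<lambda>y. u y s) x" using DERIV_isCont[OF uX] .
lemma cux: "isCont (\<lambda>y. px u y s) x" using DERIV_isCont[OF uXX] .
lemma cuxx: "isCont (\<lambda>y. px (px u) y s) x" using DERIV_isCont[OF uXXX] .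
lemma cpow: "s \<in> {0..T} \<Longrightarrow> isCont (\<lambda>y. \<rho> y s powr c) x" using DERIV_isCont[OF PX] .
lemma cPsi: "s \<in> {0..T} \<Longrightarrow> isCont (\<lambda>y. Psi \<gamma> (\<rho> y s) rb) x"
  by (rule isCont_o2[OF cr DERIV_isCont[OF Psi_deriv[OF g1 rb pos]]])
lemma cinv: "s \<in> {0..T} \<Longrightarrow> isCont (\<lambda>y. 1 / \<rho> y s) x"
proof -
  assume s: "s \<in> {0..T}"
  have "\<rho> x s > 0" by (rule pos[OF s])
  then have "\<rho> x s \<noteq> 0" by simp
  then show ?thesis by (intro continuous_intros cr)
qed

lemma rne: "s \<in> {0..T} \<Longrightarrow> \<rho> x s \<noteq> 0"
proof -
  assume s: "s \<in> {0..T}"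
  have "\<rho> x s > 0" by (rule pos[OF s])
  then show ?thesis by simp
qed

lemmas cblocks = cr crx crxx cu cux cuxx cpow cPsi cinv

lemma cGd: "s \<in> {0..T} \<Longrightarrow> isCont (\<lambda>y. Gd \<gamma> rb \<rho> y s) x"
proof -
  assume s: "s \<in> {0..T}"
  show ?thesis unfolding Gd_def by (intro continuous_intros cblocks s)
qed

lemma cGp: "s \<in> {0..T} \<Longrightarrow> isCont (\<lambda>y. Gp \<gamma> rb (\<rho> y s)) x"
  unfolding Gp_def divide_inverse
proof -
  assume s: "s \<in> {0..T}"
  have "\<rho> x s > 0" by (rule pos[OF s])
  then have n: "\<rho> x s \<noteq> 0" by simp
  show "isCont (\<lambda>y. Psi \<gamma> (\<rho> y s) rb + (\<rho> y s powr \<gamma> - rb powr \<gamma>) * inverse (\<rho> y s)) x"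
    by (intro continuous_intros cblocks s n)
qed

lemma cBDv: "s \<in> {0..T} \<Longrightarrow> isCont (\<lambda>y. BDv \<alpha> \<rho> u y s) x"
proof -
  assume s: "s \<in> {0..T}"
  show ?thesis unfolding BDv_def by (intro continuous_intros cblocks s)
qed

lemma cVx: "s \<in> {0..T} \<Longrightarrow> isCont (\<lambda>y. Vx y s) x"
proof -
  assume s: "s \<in> {0..T}"
  show ?thesis unfolding Vx_def apply (intro continuous_intros cblocks s) apply (auto simp: rne[OF s]) done
qed

lemma cH: "s \<in> {0..T} \<Longrightarrow> isCont (\<lambda>y. H1 y s + H2 y s) x"
proof -
  assume s: "s \<in> {0..T}"
  show ?thesis unfolding H1_def H2_def
    apply (intro continuous_intros cblocks cGd cGp cBDv cVx s) apply (auto simp: rne[OF s]) done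
qed

lemma ce: "s \<in> {0..T} \<Longrightarrow> isCont (\<lambda>y. e1 y s + e2 y s) x"
proof -
  assume s: "s \<in> {0..T}"
  show ?thesis
    unfolding e1_def e2_def Gd_def BDv_def
    by (intro continuous_intros cblocks s) auto
qed

lemma em: "s \<in> {0..T} \<Longrightarrow> (\<lambda>y. e1 y s + e2 y s) \<in> borel_measurable lborel"
proof -
  assume s: "s \<in> {0..T}"
  have "(\<lambda>y. e1 y s + e2 y s) \<in> borel_measurable borel"
    using ce[OF s] by (intro borel_measurable_continuous_onI continuous_at_imp_continuous_on) auto
  then show ?thesis by simp
qed


definition "DD x s = \<rho> x s powr \<alpha> * (px u x s)\<^sup>2
   + \<gamma> * \<rho> x s powr (\<gamma> - 1) * \<rho> x s powr (\<alpha> - 2) * (px \<rho> x s)\<^sup>2"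

lemma DD_nonneg: "s \<in> {0..T} \<Longrightarrow> 0 \<le> DD x s"
  unfolding DD_def using g1 by (intro add_nonneg_nonneg mult_nonneg_nonneg) auto

lemma e1_nonneg: "s \<in> {0..T} \<Longrightarrow> 0 \<le> e1 x s"
  unfolding e1_def Gd_def using pos[of s x] Psi_nonneg[OF g1 rb pos[of s x]] by auto
lemma e2_nonneg: "s \<in> {0..T} \<Longrightarrow> 0 \<le> e2 x s"
  unfolding e2_def Gd_def using pos[of s x] Psi_nonneg[OF g1 rb pos[of s x]] by auto

end



lemma sq_sum_le: "(x + y)^2 \<le> 2 * x^2 + 2 * (y::real)^2"
proof -
  have "0 \<le> (x - y)^2" by simp
  then show ?thesis by (simp add: power2_eq_square algebra_simps)
qed

lemma bnd0:
  fixes r S U Q R rx a :: real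
  assumes r: "r > 0" and S: "S \<ge> 0" and a: "a \<noteq> 0" and R: "R^2 = r * Q^2"
  shows "r*U^2/2 + r*S + (r*(U + Q*rx)^2/2 + r*S) \<le> (2 + 1/a^2) * (r*\<bar>U\<bar>^2 + (a*R*rx)^2 + r*S)"
proof -
  have a2: "a^2 > 0" using a by simp
  have e: "(a*R*rx)^2 = a^2 * (r * (Q*rx)^2)" using R by (simp add: power_mult_distrib)
  have "r*(U + Q*rx)^2 \<le> r*(2*U^2 + 2*(Q*rx)^2)" using r sq_sum_le[of U "Q*rx"] by (intro mult_left_mono) auto
  then have l: "r*U^2/2 + r*S + (r*(U + Q*rx)^2/2 + r*S) \<le> 3/2*(r*U^2) + r*(Q*rx)^2 + 2*(r*S)"
    by (simp add: algebra_simps)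
  have p1: "0 \<le> r*U^2" "0 \<le> r*(Q*rx)^2" "0 \<le> r*S" using r S by auto
  have "3/2*(r*U^2) \<le> (2 + 1/a^2) * (r*U^2)" using p1 a2 by (intro mult_right_mono) auto
  moreover have "r*(Q*rx)^2 = (2 + 1/a^2) * (a^2 * (r * (Q*rx)^2)) - 2*a^2 * (r*(Q*rx)^2)"
    using a2 by (simp add: field_simps)
  moreover have "2*a^2 * (r*(Q*rx)^2) \<ge> 0" using p1 a2 by simp
  moreover have "2*(r*S) \<le> (2 + 1/a^2) * (r*S)" using p1 a2 by (intro mult_right_mono) auto
  moreover have "(2 + 1/a^2) * (r*U^2 + a^2 * (r * (Q*rx)^2) + r*S)
     = (2 + 1/a^2) * (r*U^2) + (2 + 1/a^2) * (a^2 * (r * (Q*rx)^2)) + (2 + 1/a^2) * (r*S)"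
    by (simp add: distrib_left)
  ultimately have "3/2*(r*U^2) + r*(Q*rx)^2 + 2*(r*S) \<le> (2 + 1/a^2) * (r*U^2 + a^2 * (r * (Q*rx)^2) + r*S)"
    by linarith
  moreover have "(2 + 1/a^2) * (r*\<bar>U\<bar>^2 + (a*R*rx)^2 + r*S) = (2 + 1/a^2) * (r*U^2 + a^2 * (r * (Q*rx)^2) + r*S)"
    by (simp only: e) simp
  ultimately show ?thesis using l by linarith
qed

lemma bndS:
  fixes r S U Q R rx :: real
  assumes r: "r > 0" and S: "S \<ge> 0" and R: "R^2 = r * Q^2"
  shows "r*\<bar>U\<bar>^2 + (R*rx)^2 + r*S \<le> 7 * (r*U^2/2 + r*S + (r*(U + Q*rx)^2/2 + r*S))"
proof -
  have e: "(R*rx)^2 = r * (Q*rx)^2" using R by (simp add: power_mult_distrib)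
  have "(Q*rx)^2 \<le> 2*(U + Q*rx)^2 + 2*U^2" using sq_sum_le[of "U + Q*rx" "-U"] by simp
  then have "r*(Q*rx)^2 \<le> r*(2*(U + Q*rx)^2 + 2*U^2)" using r by (intro mult_left_mono) auto
  moreover have "0 \<le> r*(U + Q*rx)^2" "0 \<le> r*U^2" "0 \<le> r*S" using r S by auto
  moreover have "7 * (r*U^2/2 + r*S + (r*(U + Q*rx)^2/2 + r*S)) = 7/2*(r*U^2) + 14*(r*S) + 7/2*(r*(U+Q*rx)^2)"
    by (simp add: algebra_simps)
  moreover have "r*(2*(U + Q*rx)^2 + 2*U^2) = 2*(r*(U + Q*rx)^2) + 2*(r*U^2)" by (simp add: algebra_simps)
  moreover have "r*\<bar>U\<bar>^2 = r*U^2" by simp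
  ultimately show ?thesis using e by linarith
qed

lemma bndD:
  fixes A ux P1Q R b rx \<gamma> :: real
  assumes A: "A \<ge> 0" and P: "P1Q \<ge> 0" and g: "\<gamma> > 0" and R: "R^2 = P1Q"
  shows "A*ux^2 + (b*R*rx)^2 \<le> (1 + b^2/\<gamma>) * (A*ux^2 + \<gamma>*P1Q*rx^2)"
proof -
  have e: "(b*R*rx)^2 = b^2/\<gamma> * (\<gamma>*P1Q*rx^2)" using R g by (simp add: power_mult_distrib)
  have p: "0 \<le> A*ux^2" "0 \<le> \<gamma>*P1Q*rx^2" "0 \<le> b^2/\<gamma>" using A P g by auto
  then have "0 \<le> b^2/\<gamma> * (A*ux^2)" using A by (intro mult_nonneg_nonneg) auto
  moreover have "(1 + b^2/\<gamma>) * (A*ux^2 + \<gamma>*P1Q*rx^2) = A*ux^2 + \<gamma>*P1Q*rx^2 + b^2/\<gamma> * (A*ux^2) + b^2/\<gamma> * (\<gamma>*P1Q*rx^2)"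
    by (simp add: algebra_simps)
  ultimately show ?thesis unfolding e using p by linarith
qed


locale nsc2 = nsc +
  assumes btv: "boundary_terms_vanish \<alpha> \<gamma> rb T \<rho> u"
begin

lemma btv':
  shows "\<forall>t\<in>{0..T}. ((\<lambda>x. F1 x t) \<longlongrightarrow> 0) at_top \<and> ((\<lambda>x. F1 x t) \<longlongrightarrow> 0) at_bot
                   \<and> ((\<lambda>x. F2 x t) \<longlongrightarrow> 0) at_top \<and> ((\<lambda>x. F2 x t) \<longlongrightarrow> 0) at_bot"
    and "set_integrable lborel (UNIV \<times> {0..T}) (\<lambda>z::real\<times>real. pt e1 (fst z) (snd z))"
    and "set_integrable lborel (UNIV \<times> {0..T}) (\<lambda>z::real\<times>real. pt e2 (fst z) (snd z))"
    and "set_integrable lborel (UNIV \<times> {0..T}) (\<lambda>z::real\<times>real. px F1 (fst z) (snd z))"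
    and "set_integrable lborel (UNIV \<times> {0..T}) (\<lambda>z::real\<times>real. px F2 (fst z) (snd z))"
  using btv unfolding boundary_terms_vanish_def Let_def e1_def e2_def F1_def F2_def by simp_all

lemma igG: "set_integrable lborel (UNIV \<times> {0..T}) (\<lambda>z::real\<times>real. G1 (fst z) (snd z) + G2 (fst z) (snd z))"
proof -
  have "set_integrable lborel (UNIV \<times> {0..T}) (\<lambda>z::real\<times>real. pt e1 (fst z) (snd z) + pt e2 (fst z) (snd z))"
    using btv'(2,3) by (rule set_integral_add)
  then show ?thesis
  proof (rule iffD1[OF set_integrable_cong[OF refl refl], rotated])
    fix z :: "real \<times> real" assume "z \<in> UNIV \<times> {0..T}"
    then show "pt e1 (fst z) (snd z) + pt e2 (fst z) (snd z) = G1 (fst z) (snd z) + G2 (fst z) (snd z)"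
      using pt_eq[where f=e1, OF e1T] pt_eq[where f=e2, OF e2T] by (cases z) auto
  qed
qed

lemma igH: "set_integrable lborel (UNIV \<times> {0..T}) (\<lambda>z::real\<times>real. H1 (fst z) (snd z) + H2 (fst z) (snd z))"
proof -
  have "set_integrable lborel (UNIV \<times> {0..T}) (\<lambda>z::real\<times>real. px F1 (fst z) (snd z) + px F2 (fst z) (snd z))"
    using btv'(4,5) by (rule set_integral_add)
  then show ?thesis
  proof (rule iffD1[OF set_integrable_cong[OF refl refl], rotated])
    fix z :: "real \<times> real" assume "z \<in> UNIV \<times> {0..T}"
    then show "px F1 (fst z) (snd z) + px F2 (fst z) (snd z) = H1 (fst z) (snd z) + H2 (fst z) (snd z)"
      using px_eq[where f=F1, OF F1X] px_eq[where f=F2, OF F2X] by (cases z) auto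
  qed
qed

lemma bal:
  assumes c: "c > 0" and t: "t \<in> {0..T}" and fin: "(\<integral>\<^sup>+x. ennreal (c * (e1 x 0 + e2 x 0)) \<partial>lborel) < \<infinity>"
  shows "(\<integral>\<^sup>+x. ennreal (c * (e1 x t + e2 x t)) \<partial>lborel)
        + (\<integral>\<^sup>+s\<in>{0..t}. (\<integral>\<^sup>+x. ennreal (c * DD x s) \<partial>lborel) \<partial>lborel)
        = (\<integral>\<^sup>+x. ennreal (c * (e1 x 0 + e2 x 0)) \<partial>lborel)"
proof (rule balance[where g="\<lambda>x s. c * (G1 x s + G2 x s)" and F="\<lambda>x s. c * (F1 x s + F2 x s)"
      and h="\<lambda>x s. c * (H1 x s + H2 x s)" and T=T])
  show "0 \<le> t" "t \<le> T" using t by auto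
  show "((\<lambda>s. c * (e1 x s + e2 x s)) has_real_derivative c * (G1 x s + G2 x s)) (at s)"
    if "s \<in> {0..T}" for x s
    using that by (intro DERIV_cmult DERIV_add e1T e2T)
  show "((\<lambda>x. c * (F1 x s + F2 x s)) has_real_derivative c * (H1 x s + H2 x s)) (at x)"
    if "s \<in> {0..T}" for x s
    using that by (intro DERIV_cmult DERIV_add F1X F2X)
  show "isCont (\<lambda>x. c * (H1 x s + H2 x s)) x" if "s \<in> {0..T}" for x s
    using that by (intro continuous_intros cH)
  show "c * (G1 x s + G2 x s) + c * (H1 x s + H2 x s) = - (c * DD x s)" if "s \<in> {0..T}" for x s
  proof -
    have "c * (G1 x s + G2 x s) + c * (H1 x s + H2 x s) = c * ((G1 x s + H1 x s) + (G2 x s + H2 x s))"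
      by (simp add: algebra_simps)
    also have "\<dots> = - (c * DD x s)" unfolding I1[OF that] I2[OF that] DD_def by (simp add: algebra_simps)
    finally show ?thesis .
  qed
  show "0 \<le> c * DD x s" if "s \<in> {0..T}" for x s
    using DD_nonneg[OF that] c by simp
  show "0 \<le> c * (e1 x s + e2 x s)" if "s \<in> {0..T}" for x s
    using e1_nonneg[OF that] e2_nonneg[OF that] c by simp
  show "((\<lambda>x. c * (F1 x s + F2 x s)) \<longlongrightarrow> 0) at_top \<and> ((\<lambda>x. c * (F1 x s + F2 x s)) \<longlongrightarrow> 0) at_bot"
    if "s \<in> {0..T}" for s
  proof -
    have l: "((\<lambda>x. F1 x s) \<longlongrightarrow> 0) at_top" "((\<lambda>x. F1 x s) \<longlongrightarrow> 0) at_bot"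
       "((\<lambda>x. F2 x s) \<longlongrightarrow> 0) at_top" "((\<lambda>x. F2 x s) \<longlongrightarrow> 0) at_bot"
      using btv'(1) that by auto
    show ?thesis using tendsto_mult_right_zero[OF tendsto_add_zero[OF l(1) l(3)], of c]
        tendsto_mult_right_zero[OF tendsto_add_zero[OF l(2) l(4)], of c] by simp
  qed
  show "set_integrable lborel (UNIV \<times> {0..T}) (\<lambda>z. c * (G1 (fst z) (snd z) + G2 (fst z) (snd z)))"
    using igG by (rule set_integrable_mult_right)
  show "set_integrable lborel (UNIV \<times> {0..T}) (\<lambda>z. c * (H1 (fst z) (snd z) + H2 (fst z) (snd z)))"
    using igH by (rule set_integrable_mult_right)
  show "(\<lambda>x. c * (e1 x s + e2 x s)) \<in> borel_measurable lborel" if "s \<in> {0..T}" for s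
    using em[OF that] by measurable
  show "(\<integral>\<^sup>+x. ennreal (c * (e1 x 0 + e2 x 0)) \<partial>lborel) < \<infinity>" by (rule fin)
qed


lemma pw1: "r > 0 \<Longrightarrow> (r powr (\<alpha> - 1/2 - 1))^2 = r * (r powr (\<alpha> - 2))^2" for r :: real
proof -
  assume r: "r > 0"
  have "(r powr (\<alpha> - 1/2 - 1))^2 = r powr ((\<alpha> - 1/2 - 1) + (\<alpha> - 1/2 - 1))"
    unfolding power2_eq_square by (rule powr_add[symmetric])
  also have "\<dots> = r powr (1 + ((\<alpha> - 2) + (\<alpha> - 2)))" by (rule arg_cong[where f="\<lambda>e. r powr e"]) simp
  also have "\<dots> = r * (r powr (\<alpha> - 2))^2" using r unfolding powr_add power2_eq_square by simp
  finally show ?thesis .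
qed

lemma pw2: "r > 0 \<Longrightarrow> (r powr ((\<alpha> + \<gamma> - 1) / 2 - 1))^2 = r powr (\<gamma> - 1) * r powr (\<alpha> - 2)" for r :: real
proof -
  assume r: "r > 0"
  have "(r powr ((\<alpha> + \<gamma> - 1) / 2 - 1))^2 = r powr (((\<alpha> + \<gamma> - 1) / 2 - 1) + ((\<alpha> + \<gamma> - 1) / 2 - 1))"
    unfolding power2_eq_square by (rule powr_add[symmetric])
  also have "\<dots> = r powr ((\<gamma> - 1) + (\<alpha> - 2))" by (rule arg_cong[where f="\<lambda>e. r powr e"]) (simp add: field_simps)
  also have "\<dots> = r powr (\<gamma> - 1) * r powr (\<alpha> - 2)" by (rule powr_add)
  finally show ?thesis .
qed

lemma pxa: "t \<in> {0..T} \<Longrightarrow> px (\<lambda>x t. \<rho> x t powr (\<alpha> - 1/2)) x t = (\<alpha> - 1/2) * \<rho> x t powr (\<alpha> - 1/2 - 1) * px \<rho> x t"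
  by (rule px_eq[where f="\<lambda>x t. \<rho> x t powr (\<alpha> - 1/2)", OF PX])

lemma pxb: "t \<in> {0..T} \<Longrightarrow> px (\<lambda>x t. \<rho> x t powr (\<alpha> - 1/2) / (\<alpha> - 1/2)) x t = \<rho> x t powr (\<alpha> - 1/2 - 1) * px \<rho> x t"
proof -
  assume t: "t \<in> {0..T}"
  have "px (\<lambda>x t. \<rho> x t powr (\<alpha> - 1/2) / (\<alpha> - 1/2)) x t = (\<alpha> - 1/2) * \<rho> x t powr (\<alpha> - 1/2 - 1) * px \<rho> x t / (\<alpha> - 1/2)"
    by (rule px_eq[where f="\<lambda>x t. \<rho> x t powr (\<alpha> - 1/2) / (\<alpha> - 1/2)", OF DERIV_cdivide[OF PX[OF t]]])
  then show ?thesis using a1 by simp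
qed

lemma pxc: "t \<in> {0..T} \<Longrightarrow> px (\<lambda>x t. \<rho> x t powr ((\<alpha> + \<gamma> - 1) / 2) - rb powr ((\<alpha> + \<gamma> - 1) / 2)) x t
   = (\<alpha> + \<gamma> - 1) / 2 * \<rho> x t powr ((\<alpha> + \<gamma> - 1) / 2 - 1) * px \<rho> x t"
proof -
  assume t: "t \<in> {0..T}"
  show ?thesis
    using px_eq[where f="\<lambda>x t. \<rho> x t powr ((\<alpha> + \<gamma> - 1) / 2) - rb powr ((\<alpha> + \<gamma> - 1) / 2)",
        OF DERIV_diff[OF PX[OF t] DERIV_const]] by simp
qed

lemma bS: "t \<in> {0..T} \<Longrightarrow> \<rho> x t * \<bar>u x t\<bar>\<^sup>2 + (px (\<lambda>x t. \<rho> x t powr (\<alpha> - 1/2) / (\<alpha> - 1/2)) x t)\<^sup>2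
    + \<rho> x t * Psi \<gamma> (\<rho> x t) rb \<le> 7 * (e1 x t + e2 x t)"
proof -
  assume t: "t \<in> {0..T}"
  have r: "\<rho> x t > 0" by (rule pos[OF t])
  show ?thesis unfolding pxb[OF t] e1_def e2_def Gd_def BDv_def
    using bndS[OF r Psi_nonneg[OF g1 rb r] pw1[OF r], of "u x t" "px \<rho> x t"] by simp
qed

lemma b0: "t \<in> {0..T} \<Longrightarrow> e1 x t + e2 x t \<le> (2 + 1/(\<alpha> - 1/2)^2) * (\<rho> x t * \<bar>u x t\<bar>\<^sup>2
    + (px (\<lambda>x t. \<rho> x t powr (\<alpha> - 1/2)) x t)\<^sup>2 + \<rho> x t * Psi \<gamma> (\<rho> x t) rb)"
proof -
  assume t: "t \<in> {0..T}"
  have r: "\<rho> x t > 0" by (rule pos[OF t])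
  have a: "\<alpha> - 1/2 \<noteq> 0" using a1 by simp
  show ?thesis unfolding pxa[OF t] e1_def e2_def Gd_def BDv_def
    using bnd0[OF r Psi_nonneg[OF g1 rb r] a pw1[OF r], of "u x t" "px \<rho> x t"] by simp
qed

lemma bD: "t \<in> {0..T} \<Longrightarrow> \<rho> x t powr \<alpha> * (px u x t)\<^sup>2
    + (px (\<lambda>x t. \<rho> x t powr ((\<alpha> + \<gamma> - 1) / 2) - rb powr ((\<alpha> + \<gamma> - 1) / 2)) x t)\<^sup>2
    \<le> (1 + ((\<alpha> + \<gamma> - 1) / 2)^2 / \<gamma>) * DD x t"
proof -
  assume t: "t \<in> {0..T}"
  have r: "\<rho> x t > 0" by (rule pos[OF t])
  have "\<rho> x t powr \<alpha> * (px u x t)\<^sup>2 + ((\<alpha> + \<gamma> - 1) / 2 * \<rho> x t powr ((\<alpha> + \<gamma> - 1) / 2 - 1) * px \<rho> x t)\<^sup>2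
    \<le> (1 + ((\<alpha> + \<gamma> - 1) / 2)^2 / \<gamma>) * (\<rho> x t powr \<alpha> * (px u x t)\<^sup>2
        + \<gamma> * (\<rho> x t powr (\<gamma> - 1) * \<rho> x t powr (\<alpha> - 2)) * (px \<rho> x t)\<^sup>2)"
    by (rule bndD) (use g1 pw2[OF r] in auto)
  then show ?thesis unfolding pxc[OF t] DD_def by (simp add: mult.assoc)
qed

end



context nsc2
begin

lemma main:
  assumes T0: "T > 0"
  defines "E0 \<equiv> (\<integral>\<^sup>+ x. ennreal (\<rho> x 0 * \<bar>u x 0\<bar>\<^sup>2
                      + (px (\<lambda>x t. \<rho> x t powr (\<alpha> - 1/2)) x 0)\<^sup>2
                      + \<rho> x 0 * Psi \<gamma> (\<rho> x 0) rb) \<partial>lborel)"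
  assumes fin: "E0 < \<infinity>"
  shows "(SUP t\<in>{0..T}. \<integral>\<^sup>+ x. ennreal (\<rho> x t * \<bar>u x t\<bar>\<^sup>2
                      + (px (\<lambda>x t. \<rho> x t powr (\<alpha> - 1/2) / (\<alpha> - 1/2)) x t)\<^sup>2
                      + \<rho> x t * Psi \<gamma> (\<rho> x t) rb) \<partial>lborel)
          + (\<integral>\<^sup>+ t\<in>{0..T}. (\<integral>\<^sup>+ x. ennreal (\<rho> x t powr \<alpha> * (px u x t)\<^sup>2
                      + (px (\<lambda>x t. \<rho> x t powr ((\<alpha> + \<gamma> - 1) / 2) - rb powr ((\<alpha> + \<gamma> - 1) / 2)) x t)\<^sup>2)
                    \<partial>lborel) \<partial>lborel)
          \<le> ennreal ((7 + (1 + ((\<alpha> + \<gamma> - 1) / 2)^2 / \<gamma>)) * (2 + 1/(\<alpha> - 1/2)^2) * enn2real E0)"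
proof -
  define K0 where "K0 = 2 + 1/(\<alpha> - 1/2)^2"
  define c2 where "c2 = 1 + ((\<alpha> + \<gamma> - 1) / 2)^2 / \<gamma>"
  have K0: "K0 > 0" unfolding K0_def by (simp add: add_pos_nonneg)
  have c2: "c2 > 0" unfolding c2_def using g1 by (simp add: add_pos_nonneg)
  have z: "(0::real) \<in> {0..T}" using T0 by simp
  define I0 where "I0 x = \<rho> x 0 * \<bar>u x 0\<bar>\<^sup>2 + (px (\<lambda>x t. \<rho> x t powr (\<alpha> - 1/2)) x 0)\<^sup>2
                      + \<rho> x 0 * Psi \<gamma> (\<rho> x 0) rb" for x
  have E0I: "E0 = (\<integral>\<^sup>+ x. ennreal (I0 x) \<partial>lborel)" unfolding E0_def I0_def ..
  have I0nn: "I0 x \<ge> 0" for x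
    unfolding I0_def using pos[OF z, of x] Psi_nonneg[OF g1 rb pos[OF z, of x]] by auto
  have mI: "(\<lambda>x. ennreal (I0 x)) \<in> borel_measurable lborel"
  proof -
    have eqI: "I0 = (\<lambda>x. \<rho> x 0 * \<bar>u x 0\<bar>\<^sup>2 + ((\<alpha> - 1/2) * \<rho> x 0 powr (\<alpha> - 1/2 - 1) * px \<rho> x 0)\<^sup>2
                      + \<rho> x 0 * Psi \<gamma> (\<rho> x 0) rb)"
      unfolding I0_def using pxa[OF z] by auto
    have "isCont I0 x" for x unfolding eqI by (intro continuous_intros cblocks z)
    then have "I0 \<in> borel_measurable borel"
      by (intro borel_measurable_continuous_onI continuous_at_imp_continuous_on) auto
    then show ?thesis by simp
  qed
  have fc: "(\<integral>\<^sup>+x. ennreal (c * (e1 x 0 + e2 x 0)) \<partial>lborel) \<le> ennreal (c * K0) * E0" if c: "c > 0" for c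
  proof -
    have "(\<integral>\<^sup>+x. ennreal (c * (e1 x 0 + e2 x 0)) \<partial>lborel) \<le> (\<integral>\<^sup>+x. ennreal (c * K0) * ennreal (I0 x) \<partial>lborel)"
    proof (rule nn_integral_mono)
      fix x
      have "c * (e1 x 0 + e2 x 0) \<le> c * (K0 * I0 x)"
        using b0[OF z, of x] c unfolding K0_def I0_def by (intro mult_left_mono) auto
      then have "ennreal (c * (e1 x 0 + e2 x 0)) \<le> ennreal (c * K0 * I0 x)" by (simp add: mult.assoc ennreal_leI)
      also have "\<dots> = ennreal (c * K0) * ennreal (I0 x)" using c K0 I0nn[of x] by (intro ennreal_mult) auto
      finally show "ennreal (c * (e1 x 0 + e2 x 0)) \<le> ennreal (c * K0) * ennreal (I0 x)" .
    qed
    also have "\<dots> = ennreal (c * K0) * E0" unfolding E0I by (rule nn_integral_cmult[OF mI])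
    finally show ?thesis .
  qed
  have finc: "(\<integral>\<^sup>+x. ennreal (c * (e1 x 0 + e2 x 0)) \<partial>lborel) < \<infinity>" if c: "c > 0" for c
  proof -
    have "ennreal (c * K0) * E0 < \<infinity>" using fin by (simp add: ennreal_mult_less_top)
    then show ?thesis using fc[OF c] by (rule le_less_trans[rotated])
  qed
  have S: "(SUP t\<in>{0..T}. \<integral>\<^sup>+ x. ennreal (\<rho> x t * \<bar>u x t\<bar>\<^sup>2
                      + (px (\<lambda>x t. \<rho> x t powr (\<alpha> - 1/2) / (\<alpha> - 1/2)) x t)\<^sup>2
                      + \<rho> x t * Psi \<gamma> (\<rho> x t) rb) \<partial>lborel) \<le> ennreal (7 * K0) * E0"
  proof (rule SUP_least)
    fix t :: real assume t: "t \<in> {0..T}"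
    have "(\<integral>\<^sup>+ x. ennreal (\<rho> x t * \<bar>u x t\<bar>\<^sup>2
                      + (px (\<lambda>x t. \<rho> x t powr (\<alpha> - 1/2) / (\<alpha> - 1/2)) x t)\<^sup>2
                      + \<rho> x t * Psi \<gamma> (\<rho> x t) rb) \<partial>lborel)
        \<le> (\<integral>\<^sup>+x. ennreal (7 * (e1 x t + e2 x t)) \<partial>lborel)"
      by (rule nn_integral_mono) (use bS[OF t] in \<open>auto intro: ennreal_leI\<close>)
    also have "\<dots> \<le> (\<integral>\<^sup>+x. ennreal (7 * (e1 x 0 + e2 x 0)) \<partial>lborel)"
    proof -
      have h: "(\<integral>\<^sup>+x. ennreal (7 * (e1 x t + e2 x t)) \<partial>lborel)
        + (\<integral>\<^sup>+s\<in>{0..t}. (\<integral>\<^sup>+x. ennreal (7 * DD x s) \<partial>lborel) \<partial>lborel)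
        = (\<integral>\<^sup>+x. ennreal (7 * (e1 x 0 + e2 x 0)) \<partial>lborel)"
        by (rule bal[where c=7 and t=t, OF _ t finc[of 7]]) simp_all
      show ?thesis by (rule ord_le_eq_trans[OF add_increasing2[OF zero_le order_refl] h])
    qed
    also have "\<dots> \<le> ennreal (7 * K0) * E0" by (rule fc) simp
    finally show "(\<integral>\<^sup>+ x. ennreal (\<rho> x t * \<bar>u x t\<bar>\<^sup>2
                      + (px (\<lambda>x t. \<rho> x t powr (\<alpha> - 1/2) / (\<alpha> - 1/2)) x t)\<^sup>2
                      + \<rho> x t * Psi \<gamma> (\<rho> x t) rb) \<partial>lborel) \<le> ennreal (7 * K0) * E0" .
  qed
  have Dp: "(\<integral>\<^sup>+ t\<in>{0..T}. (\<integral>\<^sup>+ x. ennreal (\<rho> x t powr \<alpha> * (px u x t)\<^sup>2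
                      + (px (\<lambda>x t. \<rho> x t powr ((\<alpha> + \<gamma> - 1) / 2) - rb powr ((\<alpha> + \<gamma> - 1) / 2)) x t)\<^sup>2)
                    \<partial>lborel) \<partial>lborel) \<le> ennreal (c2 * K0) * E0"
  proof -
    have "(\<integral>\<^sup>+ t\<in>{0..T}. (\<integral>\<^sup>+ x. ennreal (\<rho> x t powr \<alpha> * (px u x t)\<^sup>2
                      + (px (\<lambda>x t. \<rho> x t powr ((\<alpha> + \<gamma> - 1) / 2) - rb powr ((\<alpha> + \<gamma> - 1) / 2)) x t)\<^sup>2)
                    \<partial>lborel) \<partial>lborel)
       \<le> (\<integral>\<^sup>+ t\<in>{0..T}. (\<integral>\<^sup>+ x. ennreal (c2 * DD x t) \<partial>lborel) \<partial>lborel)"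
    proof (rule nn_integral_mono)
      fix t :: real
      show "(\<integral>\<^sup>+ x. ennreal (\<rho> x t powr \<alpha> * (px u x t)\<^sup>2
                      + (px (\<lambda>x t. \<rho> x t powr ((\<alpha> + \<gamma> - 1) / 2) - rb powr ((\<alpha> + \<gamma> - 1) / 2)) x t)\<^sup>2)
                    \<partial>lborel) * indicator {0..T} t
          \<le> (\<integral>\<^sup>+ x. ennreal (c2 * DD x t) \<partial>lborel) * indicator {0..T} t"
      proof (cases "t \<in> {0..T}")
        case True
        have "(\<integral>\<^sup>+ x. ennreal (\<rho> x t powr \<alpha> * (px u x t)\<^sup>2
                      + (px (\<lambda>x t. \<rho> x t powr ((\<alpha> + \<gamma> - 1) / 2) - rb powr ((\<alpha> + \<gamma> - 1) / 2)) x t)\<^sup>2)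
                    \<partial>lborel) \<le> (\<integral>\<^sup>+ x. ennreal (c2 * DD x t) \<partial>lborel)"
          by (intro nn_integral_mono ennreal_leI) (use bD[OF True] in \<open>simp add: c2_def\<close>)
        then show ?thesis using True by simp
      qed simp
    qed
    also have "\<dots> \<le> (\<integral>\<^sup>+x. ennreal (c2 * (e1 x 0 + e2 x 0)) \<partial>lborel)"
    proof -
      have h: "(\<integral>\<^sup>+x. ennreal (c2 * (e1 x T + e2 x T)) \<partial>lborel)
        + (\<integral>\<^sup>+s\<in>{0..T}. (\<integral>\<^sup>+x. ennreal (c2 * DD x s) \<partial>lborel) \<partial>lborel)
        = (\<integral>\<^sup>+x. ennreal (c2 * (e1 x 0 + e2 x 0)) \<partial>lborel)"
        by (rule bal[where c=c2 and t=T, OF c2 _ finc[OF c2]]) (use T0 in simp)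
      show ?thesis by (rule ord_le_eq_trans[OF add_increasing[OF zero_le order_refl] h])
    qed
    also have "\<dots> \<le> ennreal (c2 * K0) * E0" by (rule fc[OF c2])
    finally show ?thesis .
  qed
  define E where "E = enn2real E0"
  have E0r: "E0 = ennreal E" using fin by (simp add: E_def)
  have E0': "E \<ge> 0" by (simp add: E_def)
  have s1: "ennreal (7 * K0) * E0 = ennreal (7 * K0 * E)"
    unfolding E0r using K0 E0' by (simp add: ennreal_mult)
  have s2: "ennreal (c2 * K0) * E0 = ennreal (c2 * K0 * E)"
    unfolding E0r using K0 c2 E0' by (simp add: ennreal_mult)
  have s3: "ennreal (7 * K0 * E) + ennreal (c2 * K0 * E) = ennreal ((7 + c2) * K0 * E)"
    using K0 c2 E0' by (simp add: ennreal_plus[symmetric] algebra_simps del: ennreal_plus)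
  have "(7 + (1 + ((\<alpha> + \<gamma> - 1) / 2)^2 / \<gamma>)) * (2 + 1/(\<alpha> - 1/2)^2) * enn2real E0 = (7 + c2) * K0 * E"
    unfolding K0_def c2_def E_def ..
  then show ?thesis using add_mono[OF S Dp] unfolding s1 s2 s3 by simp
qed

end

theorem lemma3p1:
  fixes \<alpha> \<gamma> :: real
  assumes "\<gamma> > 1" and "0 < \<alpha>" and "\<alpha> < 1/2"
  shows "\<exists>C :: real \<Rightarrow> real. \<forall>(rb::real) (T::real) (\<rho>::real \<Rightarrow> real \<Rightarrow> real) (u::real \<Rightarrow> real \<Rightarrow> real).
    rb \<ge> 0 \<longrightarrow> T > 0 \<longrightarrow> smooth2 \<rho> \<longrightarrow> smooth2 u
    \<longrightarrow> (\<forall>x t. t \<in> {0..T} \<longrightarrow> \<rho> x t > 0)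
    \<longrightarrow> NS_solution \<alpha> \<gamma> T \<rho> u
    \<longrightarrow> boundary_terms_vanish \<alpha> \<gamma> rb T \<rho> u
    \<longrightarrow> (let E0 = (\<integral>\<^sup>+ x. ennreal (\<rho> x 0 * \<bar>u x 0\<bar>\<^sup>2
                      + (px (\<lambda>x t. \<rho> x t powr (\<alpha> - 1/2)) x 0)\<^sup>2
                      + \<rho> x 0 * Psi \<gamma> (\<rho> x 0) rb) \<partial>lborel)
        in E0 < \<infinity> \<longrightarrow>
          (SUP t\<in>{0..T}. \<integral>\<^sup>+ x. ennreal (\<rho> x t * \<bar>u x t\<bar>\<^sup>2
                      + (px (\<lambda>x t. \<rho> x t powr (\<alpha> - 1/2) / (\<alpha> - 1/2)) x t)\<^sup>2
                      + \<rho> x t * Psi \<gamma> (\<rho> x t) rb) \<partial>lborel)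
          + (\<integral>\<^sup>+ t\<in>{0..T}. (\<integral>\<^sup>+ x. ennreal (\<rho> x t powr \<alpha> * (px u x t)\<^sup>2
                      + (px (\<lambda>x t. \<rho> x t powr ((\<alpha> + \<gamma> - 1) / 2) - rb powr ((\<alpha> + \<gamma> - 1) / 2)) x t)\<^sup>2)
                    \<partial>lborel) \<partial>lborel)
          \<le> ennreal (C (enn2real E0)))"
proof (intro exI[where x="\<lambda>E. (7 + (1 + ((\<alpha> + \<gamma> - 1) / 2)^2 / \<gamma>)) * (2 + 1/(\<alpha> - 1/2)^2) * E"] allI impI)
  fix rb T :: real and \<rho> u :: "real \<Rightarrow> real \<Rightarrow> real"
  assume rb: "rb \<ge> 0" and T0: "T > 0" and sr: "smooth2 \<rho>" and su: "smooth2 u"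
    and pos: "\<forall>x t. t \<in> {0..T} \<longrightarrow> \<rho> x t > 0"
    and ns: "NS_solution \<alpha> \<gamma> T \<rho> u" and btv: "boundary_terms_vanish \<alpha> \<gamma> rb T \<rho> u"
  interpret nsc2 \<alpha> \<gamma> rb T \<rho> u
    by unfold_locales (use assms rb sr su pos ns btv in auto)
  show "let E0 = (\<integral>\<^sup>+ x. ennreal (\<rho> x 0 * \<bar>u x 0\<bar>\<^sup>2
                      + (px (\<lambda>x t. \<rho> x t powr (\<alpha> - 1/2)) x 0)\<^sup>2
                      + \<rho> x 0 * Psi \<gamma> (\<rho> x 0) rb) \<partial>lborel)
        in E0 < \<infinity> \<longrightarrow>
          (SUP t\<in>{0..T}. \<integral>\<^sup>+ x. ennreal (\<rho> x t * \<bar>u x t\<bar>\<^sup>2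
                      + (px (\<lambda>x t. \<rho> x t powr (\<alpha> - 1/2) / (\<alpha> - 1/2)) x t)\<^sup>2
                      + \<rho> x t * Psi \<gamma> (\<rho> x t) rb) \<partial>lborel)
          + (\<integral>\<^sup>+ t\<in>{0..T}. (\<integral>\<^sup>+ x. ennreal (\<rho> x t powr \<alpha> * (px u x t)\<^sup>2
                      + (px (\<lambda>x t. \<rho> x t powr ((\<alpha> + \<gamma> - 1) / 2) - rb powr ((\<alpha> + \<gamma> - 1) / 2)) x t)\<^sup>2)
                    \<partial>lborel) \<partial>lborel)
          \<le> ennreal ((\<lambda>E. (7 + (1 + ((\<alpha> + \<gamma> - 1) / 2)^2 / \<gamma>)) * (2 + 1/(\<alpha> - 1/2)^2) * E) (enn2real E0))"
    unfolding Let_def using main[OF T0] by simp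
qed

end
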